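(* We may fix a basis for $\mathcal{M}_k^j(\rho)$ such that $G$ is of standard form, i.e. $G=\Omega_j\,\mathrm{diag}\{\omega_1,\dots,\omega_k\}$ (equivalently, up to a permutation, $G$ has the $k$ distinct eigenvalues $\Omega_j\omega_r$, $r=1,\dots,k$, each of multiplicity one).
   Context: Non-singular monad matrices are $(A,B,C,D)$ with $A\in GL(k,\mathbb{C})$, $B\in Mat_{k\times k}(\mathbb{C})$, $C\in Mat_{k\times 2}(\mathbb{C})$, $D\in Mat_{2\times k}(\mathbb{C})$, satisfying $[A,B]+CD=0$ and the full-rank conditions, up to $(A,B,C,D)\sim(hAh^{-1},hBh^{-1},hC,Dh^{-1})$; $C_p$, $D_p$ denote the $p$-th column of $C$ and row of $D$. Fix $j\in\mathbb{Z}_{2k}$ even and $\omega\in(-\pi,\pi)$. $\mathcal{M}_k^j(\rho)$ is the set of such matrices for which there is $g\in GL(k,\mathbb{C})$ with $e^{\imath\frac{j\pi}{k}}A=gAg^{-1}$, $e^{\imath\frac{\pi}{k}}B=g(B-C_1D_1A^{-1})g^{-1}$, $e^{\imath\frac{\pi}{2k}}e^{\imath\frac{j\pi}{4k}}C_1=e^{\imath\omega}gC_2$, $e^{\imath\frac{\pi}{2k}}e^{\imath\frac{3j\pi}{4k}}C_2=e^{-\imath\omega}gAC_1$, $e^{\imath\frac{\pi}{2k}}e^{\imath\frac{3j\pi}{4k}}D_1=e^{-\imath\omega}D_2g^{-1}$, $e^{\imath\frac{\pi}{2k}}e^{\imath\frac{j\pi}{4k}}D_2=e^{\imath\omega}D_1A^{-1}g^{-1}$.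 $G=e^{-\imath\frac{j\pi}{2k}}g^2A$, which satisfies $e^{\imath\frac{2j\pi}{k}}A=GAG^{-1}$, $e^{\imath\frac{2\pi}{k}}B=GBG^{-1}$, $e^{\imath\frac{\pi}{k}}C=GC\,\mathrm{adj}(\sigma_{2j\pi/k})$, $e^{\imath\frac{\pi}{k}}D=\sigma_{2j\pi/k}DG^{-1}$ with $\sigma_\varphi=\mathrm{diag}(e^{-\imath\frac{3\varphi}{4}},e^{-\imath\frac{\varphi}{4}})$, $\mathrm{adj}(\sigma)=\det(\sigma)\sigma^{-1}$. Notation: $\Omega_j=e^{\imath\frac{(2-j)\pi}{2k}}$, $\omega_r=e^{\imath\frac{2\pi r}{k}}$. *)

theory Defs
  imports Complex_Main "Jordan_Normal_Form.Matrix"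
begin

definition minv :: "complex mat \<Rightarrow> complex mat" where
  "minv M = (SOME N. inverts_mat M N \<and> inverts_mat N M)"

abbreviation expi :: "real \<Rightarrow> complex" where
  "expi t \<equiv> cis t"

definition colC :: "complex mat \<Rightarrow> nat \<Rightarrow> complex mat" where
  "colC C p = mat_of_cols (dim_row C) [col C (p - 1)]"

definition rowD :: "complex mat \<Rightarrow> nat \<Rightarrow> complex mat" where
  "rowD D p = mat_of_rows (dim_col D) [row D (p - 1)]"

definition nonsingular_monad :: "nat \<Rightarrow> complex mat \<Rightarrow> complex mat \<Rightarrow> complex mat \<Rightarrow> complex mat \<Rightarrow> bool" where
  "nonsingular_monad k A B C D \<longleftrightarrow>
     A \<in> carrier_mat k k \<and> invertible_mat A \<and> B \<in> carrier_mat k k \<and>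
     C \<in> carrier_mat k 2 \<and> D \<in> carrier_mat 2 k \<and>
     A * B - B * A + C * D = 0\<^sub>m k k \<and>
     (\<forall>z w. (\<forall>y \<in> carrier_vec k. \<exists>x1 \<in> carrier_vec k. \<exists>x2 \<in> carrier_vec k. \<exists>x3 \<in> carrier_vec 2.
                 (A - z \<cdot>\<^sub>m 1\<^sub>m k) *\<^sub>v x1 + (B - w \<cdot>\<^sub>m 1\<^sub>m k) *\<^sub>v x2 + C *\<^sub>v x3 = y) \<and>
             (\<forall>x \<in> carrier_vec k. (A - z \<cdot>\<^sub>m 1\<^sub>m k) *\<^sub>v x = 0\<^sub>v k \<and> (B - w \<cdot>\<^sub>m 1\<^sub>m k) *\<^sub>v x = 0\<^sub>v k
                 \<and> D *\<^sub>v x = 0\<^sub>v 2 \<longrightarrow> x = 0\<^sub>v k))"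

definition symmetry_witness :: "nat \<Rightarrow> int \<Rightarrow> real \<Rightarrow> complex mat \<Rightarrow> complex mat \<Rightarrow> complex mat \<Rightarrow> complex mat \<Rightarrow> complex mat \<Rightarrow> bool" where
  "symmetry_witness k j \<omega> A B C D g \<longleftrightarrow>
     g \<in> carrier_mat k k \<and> invertible_mat g \<and>
     expi (j * pi / k) \<cdot>\<^sub>m A = g * A * minv g \<and>
     expi (pi / k) \<cdot>\<^sub>m B = g * (B - colC C 1 * rowD D 1 * minv A) * minv g \<and>
     (expi (pi / (2 * k)) * expi (j * pi / (4 * k))) \<cdot>\<^sub>m colC C 1 = expi \<omega> \<cdot>\<^sub>m (g * colC C 2) \<and>
     (expi (pi / (2 * k)) * expi (3 * j * pi / (4 * k))) \<cdot>\<^sub>m colC C 2 = expi (- \<omega>) \<cdot>\<^sub>m (g * A * colC C 1) \<and>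
     (expi (pi / (2 * k)) * expi (3 * j * pi / (4 * k))) \<cdot>\<^sub>m rowD D 1 = expi (- \<omega>) \<cdot>\<^sub>m (rowD D 2 * minv g) \<and>
     (expi (pi / (2 * k)) * expi (j * pi / (4 * k))) \<cdot>\<^sub>m rowD D 2 = expi \<omega> \<cdot>\<^sub>m (rowD D 1 * minv A * minv g)"

definition in_Mkj :: "nat \<Rightarrow> int \<Rightarrow> real \<Rightarrow> complex mat \<Rightarrow> complex mat \<Rightarrow> complex mat \<Rightarrow> complex mat \<Rightarrow> bool" where
  "in_Mkj k j \<omega> A B C D \<longleftrightarrow> nonsingular_monad k A B C D \<and> (\<exists>g. symmetry_witness k j \<omega> A B C D g)"

definition bigG :: "nat \<Rightarrow> int \<Rightarrow> complex mat \<Rightarrow> complex mat \<Rightarrow> complex mat" where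
  "bigG k j g A = expi (- (j * pi / (2 * k))) \<cdot>\<^sub>m (g * g * A)"

definition Omega :: "nat \<Rightarrow> int \<Rightarrow> complex" where
  "Omega k j = expi ((2 - j) * pi / (2 * k))"

definition omega_r :: "nat \<Rightarrow> nat \<Rightarrow> complex" where
  "omega_r k r = expi (2 * pi * r / k)"

end

theory Submission
  imports Defs "Jordan_Normal_Form.Schur_Decomposition" "Jordan_Normal_Form.Determinant"
begin


lemma smult_mat_mult_vec: assumes "A \<in> carrier_mat nr nc" "v \<in> carrier_vec nc"
  shows "(c \<cdot>\<^sub>m A) *\<^sub>v v = (c::complex) \<cdot>\<^sub>v (A *\<^sub>v v)"
  using assms by (intro eq_vecI) (auto simp: scalar_prod_def sum_distrib_left mult.assoc)

lemma minv_props: assumes M: "M \<in> carrier_mat n n" and inv: "invertible_mat M"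
  shows "minv M \<in> carrier_mat n n" "M * minv M = 1\<^sub>m n" "minv M * M = 1\<^sub>m n"
proof -
  from inv obtain B where "inverts_mat M B \<and> inverts_mat B M" unfolding invertible_mat_def by blast
  hence "inverts_mat M (minv M) \<and> inverts_mat (minv M) M" unfolding minv_def by (rule someI)
  hence 1: "M * minv M = 1\<^sub>m n" and 2: "minv M * M = 1\<^sub>m (dim_row (minv M))"
    using M unfolding inverts_mat_def by auto
  have "dim_col (minv M) = n" using arg_cong[OF 1, of dim_col] by simp
  moreover have "dim_row (minv M) = n" using arg_cong[OF 2, of dim_col] M by simp
  ultimately show "minv M \<in> carrier_mat n n" by auto
  show "M * minv M = 1\<^sub>m n" by fact
  show "minv M * M = 1\<^sub>m n" using 2 \<open>dim_row (minv M) = n\<close> by simp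
qed

lemma minv_unique: assumes M: "M \<in> carrier_mat n n" and N: "N \<in> carrier_mat n n"
  and MN: "M * N = 1\<^sub>m n" and NM: "N * M = 1\<^sub>m n"
  shows "minv M = N"
proof -
  have inv: "invertible_mat M" unfolding invertible_mat_def inverts_mat_def
    using M N MN NM by (auto intro!: exI[of _ N])
  note mp = minv_props[OF M inv]
  have "minv M = minv M * (M * N)" unfolding MN using mp(1) by simp
  also have "\<dots> = (minv M * M) * N" using assoc_mult_mat[OF mp(1) M N] by simp
  also have "\<dots> = N" using mp N by simp
  finally show ?thesis .
qed

lemma pow_mat_commute: assumes M: "M \<in> carrier_mat n n" and L: "L \<in> carrier_mat n n"
  and c: "L * M = M * L"
  shows "L * (M ^\<^sub>m i) = (M ^\<^sub>m i) * L"
proof (induct i)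
  case 0 thus ?case using M L by simp
next
  case (Suc i)
  have "L * (M ^\<^sub>m Suc i) = (L * M ^\<^sub>m i) * M" using M L by (simp del: assoc_mult_mat add: assoc_mult_mat[of L n n _ n M n, symmetric])
  also have "\<dots> = M ^\<^sub>m i * (L * M)" unfolding Suc using assoc_mult_mat[OF pow_carrier_mat[OF M] L M] .
  also have "\<dots> = M ^\<^sub>m i * (M * L)" using c by simp
  also have "\<dots> = M ^\<^sub>m Suc i * L" using assoc_mult_mat[OF pow_carrier_mat[OF M] M L] by simp
  finally show ?case .
qed

lemma mult_mat_vec_zero[simp]: assumes "A \<in> carrier_mat nr nc" shows "A *\<^sub>v 0\<^sub>v nc = (0\<^sub>v nr :: 'a :: semiring_0 vec)"
  using assms by (intro eq_vecI) auto

definition kcl :: "complex mat \<Rightarrow> complex vec \<Rightarrow> nat \<Rightarrow> complex vec \<Rightarrow> bool" where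
  "kcl M v n x \<longleftrightarrow> x \<in> carrier_vec n \<and> (\<forall>L n'. L \<in> carrier_mat n' n \<longrightarrow>
     (\<forall>i. L *\<^sub>v ((M ^\<^sub>m i) *\<^sub>v v) = 0\<^sub>v n') \<longrightarrow> L *\<^sub>v x = 0\<^sub>v n')"

lemma kcl_start: assumes "M \<in> carrier_mat n n" "v \<in> carrier_vec n" shows "kcl M v n v"
  unfolding kcl_def
proof (intro conjI allI impI)
  fix L :: "complex mat" and n' assume L: "L \<in> carrier_mat n' n"
    and h: "\<forall>i. L *\<^sub>v ((M ^\<^sub>m i) *\<^sub>v v) = 0\<^sub>v n'"
  from h[rule_format, of 0] show "L *\<^sub>v v = 0\<^sub>v n'" using assms by simp
qed (use assms in auto)

lemma kcl_step: assumes M: "M \<in> carrier_mat n n" and k: "kcl M v n x" and v: "v \<in> carrier_vec n"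
  shows "kcl M v n ((M - \<mu> \<cdot>\<^sub>m 1\<^sub>m n) *\<^sub>v x)"
proof -
  have x: "x \<in> carrier_vec n" using k unfolding kcl_def by auto
  have eq: "(M - \<mu> \<cdot>\<^sub>m 1\<^sub>m n) *\<^sub>v x = M *\<^sub>v x - \<mu> \<cdot>\<^sub>v x"
    using M x by (simp add: minus_mult_distrib_mat_vec[OF M _ x] smult_mat_mult_vec[of _ n n])
  show ?thesis unfolding kcl_def
  proof (intro conjI allI impI)
    show "(M - \<mu> \<cdot>\<^sub>m 1\<^sub>m n) *\<^sub>v x \<in> carrier_vec n" unfolding eq using M x by auto
    fix L :: "complex mat" and n' assume L: "L \<in> carrier_mat n' n"
      and h: "\<forall>i. L *\<^sub>v ((M ^\<^sub>m i) *\<^sub>v v) = 0\<^sub>v n'"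
    have h2: "\<forall>i. (L * M) *\<^sub>v ((M ^\<^sub>m i) *\<^sub>v v) = 0\<^sub>v n'"
    proof
      fix i
      have "(L * M) *\<^sub>v ((M ^\<^sub>m i) *\<^sub>v v) = L *\<^sub>v ((M * M ^\<^sub>m i) *\<^sub>v v)"
        using assoc_mult_mat_vec[OF L M, of "(M ^\<^sub>m i) *\<^sub>v v"] assoc_mult_mat_vec[OF M pow_carrier_mat[OF M] v, of i] mult_mat_vec_carrier[OF pow_carrier_mat[OF M] v, of i] by simp
      also have "M * M ^\<^sub>m i = M ^\<^sub>m Suc i" using pow_mat_commute[OF M M refl, of i] by simp
      finally show "(L * M) *\<^sub>v ((M ^\<^sub>m i) *\<^sub>v v) = 0\<^sub>v n'" using h[rule_format, of "Suc i"] by simp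
    qed
    have "L * M \<in> carrier_mat n' n" using L M by simp
    hence 1: "(L * M) *\<^sub>v x = 0\<^sub>v n'" using k h2 unfolding kcl_def by blast
    have 2: "L *\<^sub>v x = 0\<^sub>v n'" using k h L unfolding kcl_def by blast
    have "L *\<^sub>v ((M - \<mu> \<cdot>\<^sub>m 1\<^sub>m n) *\<^sub>v x) = L *\<^sub>v (M *\<^sub>v x) - \<mu> \<cdot>\<^sub>v (L *\<^sub>v x)"
      unfolding eq using L M x by (simp add: mult_minus_distrib_mat_vec[OF L] mult_mat_vec[OF L])
    also have "\<dots> = 0\<^sub>v n'" using 1 2 L M x by (intro eq_vecI) auto
    finally show "L *\<^sub>v ((M - \<mu> \<cdot>\<^sub>m 1\<^sub>m n) *\<^sub>v x) = 0\<^sub>v n'" .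
  qed
qed

lemma krylov_eigen: assumes M: "M \<in> carrier_mat n n" and v: "v \<in> carrier_vec n" and v0: "v \<noteq> 0\<^sub>v n"
  shows "\<exists>x z. kcl M v n x \<and> x \<noteq> 0\<^sub>v n \<and> M *\<^sub>v x = z \<cdot>\<^sub>v x"
proof -
  obtain es where cp: "char_poly M = (\<Prod> a \<leftarrow> es. [:- a, 1:])" using char_poly_factorized[OF M] by blast
  obtain T P Q where sd: "schur_decomposition M es = (T,P,Q)" by (metis prod_cases3)
  from schur_decomposition[OF M cp sd] have sw: "similar_mat_wit M T P Q" and ut: "upper_triangular T" by blast+
  have dn: "n = dim_row M" using M by simp
  from similar_mat_witD[OF dn sw]
  have PQ: "P * Q = 1\<^sub>m n" and QP: "Q * P = 1\<^sub>m n" and MPTQ: "M = P * T * Q"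
    and T: "T \<in> carrier_mat n n" and P: "P \<in> carrier_mat n n" and Q: "Q \<in> carrier_mat n n" by simp_all
  have QM: "Q * M = T * Q"
  proof -
    have "Q * M = Q * (P * (T * Q))" unfolding MPTQ using P T Q by simp
    also have "\<dots> = (Q * P) * (T * Q)" using Q P T by (simp add: assoc_mult_mat[of Q n n P n "T * Q" n])
    finally show ?thesis using QP T Q by simp
  qed
  have main: "\<And>x. kcl M v n x \<Longrightarrow> x \<noteq> 0\<^sub>v n \<Longrightarrow> (\<forall>i. t \<le> i \<longrightarrow> i < n \<longrightarrow> (Q *\<^sub>v x) $ i = 0)
     \<Longrightarrow> \<exists>x z. kcl M v n x \<and> x \<noteq> 0\<^sub>v n \<and> M *\<^sub>v x = z \<cdot>\<^sub>v x" for t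
  proof (induct t)
    case (0 x)
    have x: "x \<in> carrier_vec n" using 0 unfolding kcl_def by auto
    have "Q *\<^sub>v x = 0\<^sub>v n" using 0 Q x by (intro eq_vecI) auto
    hence "P *\<^sub>v (Q *\<^sub>v x) = 0\<^sub>v n" using P by simp
    hence "x = 0\<^sub>v n" using PQ P Q x by (simp add: assoc_mult_mat_vec[OF P Q x, symmetric])
    thus ?case using 0 by simp
  next
    case (Suc t x)
    have x: "x \<in> carrier_vec n" using Suc unfolding kcl_def by auto
    define \<mu> where "\<mu> = T $$ (t,t)"
    define y where "y = (M - \<mu> \<cdot>\<^sub>m 1\<^sub>m n) *\<^sub>v x"
    have yeq: "y = M *\<^sub>v x - \<mu> \<cdot>\<^sub>v x" unfolding y_def
      using M x by (simp add: minus_mult_distrib_mat_vec[OF M _ x] smult_mat_mult_vec[of _ n n])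
    have y: "y \<in> carrier_vec n" unfolding yeq using M x by auto
    show ?case
    proof (cases "y = 0\<^sub>v n")
      case True
      have "M *\<^sub>v x = \<mu> \<cdot>\<^sub>v x"
      proof (intro eq_vecI)
        fix i assume i: "i < dim_vec (\<mu> \<cdot>\<^sub>v x)"
        have "y $ i = 0" using True i x by simp
        thus "(M *\<^sub>v x) $ i = (\<mu> \<cdot>\<^sub>v x) $ i" unfolding yeq using i M x by simp
      qed (use M x in simp)
      thus ?thesis using Suc by blast
    next
      case False
      have ky: "kcl M v n y" unfolding y_def by (rule kcl_step[OF M Suc(2) v])
      define w where "w = Q *\<^sub>v x"
      have w: "w \<in> carrier_vec n" unfolding w_def using Q x by simp
      have wz: "\<And>l. t < l \<Longrightarrow> l < n \<Longrightarrow> w $ l = 0" unfolding w_def using Suc(4) by auto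
      have Qy: "Q *\<^sub>v y = T *\<^sub>v w - \<mu> \<cdot>\<^sub>v w"
      proof -
        have "Q *\<^sub>v y = Q *\<^sub>v (M *\<^sub>v x) - \<mu> \<cdot>\<^sub>v (Q *\<^sub>v x)" unfolding yeq
          using Q M x by (simp add: mult_minus_distrib_mat_vec[OF Q] mult_mat_vec[OF Q])
        also have "Q *\<^sub>v (M *\<^sub>v x) = (Q * M) *\<^sub>v x" using Q M x by simp
        also have "\<dots> = T *\<^sub>v w" unfolding QM w_def using T Q x by simp
        finally show ?thesis unfolding w_def .
      qed
      have supp: "\<forall>i. t \<le> i \<longrightarrow> i < n \<longrightarrow> (Q *\<^sub>v y) $ i = 0"
      proof (intro allI impI)
        fix i assume ti: "t \<le> i" and i: "i < n"
        have "(T *\<^sub>v w) $ i = (\<Sum>l\<in>{0..<n}. T $$ (i,l) * w $ l)"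
          using T w i by (simp add: scalar_prod_def)
        also have "\<dots> = T $$ (i,i) * w $ i + (\<Sum>l\<in>{0..<n} - {i}. T $$ (i,l) * w $ l)"
          using i by (subst sum.remove[of _ i]) auto
        also have "(\<Sum>l\<in>{0..<n} - {i}. T $$ (i,l) * w $ l) = 0"
        proof (rule sum.neutral, rule ballI)
          fix l assume l: "l \<in> {0..<n} - {i}"
          show "T $$ (i,l) * w $ l = 0"
          proof (cases "l < i")
            case True thus ?thesis using ut T i unfolding upper_triangular_def by auto
          next
            case False thus ?thesis using wz l ti by auto
          qed
        qed
        finally have Tw: "(T *\<^sub>v w) $ i = T $$ (i,i) * w $ i" by simp
        show "(Q *\<^sub>v y) $ i = 0" unfolding Qy using Tw i T w wz[of i] ti \<mu>_def
          by (cases "i = t") auto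
      qed
      from Suc(1)[OF ky False supp] show ?thesis .
    qed
  qed
  show ?thesis by (rule main[of v n, OF kcl_start[OF M v] v0]) auto
qed

lemma mat_vec_sum: fixes G :: "complex mat" assumes G: "G \<in> carrier_mat n n" and v: "\<And>i. i \<in> I \<Longrightarrow> v i \<in> carrier_vec n"
  and fin: "finite I" and r: "r < n"
  shows "(\<Sum>l<n. G $$ (r,l) * (\<Sum>i\<in>I. c i * v i $ l)) = (\<Sum>i\<in>I. c i * (G *\<^sub>v v i) $ r)"
proof -
  have "(\<Sum>l<n. G $$ (r,l) * (\<Sum>i\<in>I. c i * v i $ l)) = (\<Sum>i\<in>I. c i * (\<Sum>l<n. G $$ (r,l) * v i $ l))"
    proof -
    have "(\<Sum>l<n. G $$ (r,l) * (\<Sum>i\<in>I. c i * v i $ l)) = (\<Sum>l<n. \<Sum>i\<in>I. c i * (G $$ (r,l) * v i $ l))"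
      by (simp add: sum_distrib_left ac_simps)
    also have "\<dots> = (\<Sum>i\<in>I. \<Sum>l<n. c i * (G $$ (r,l) * v i $ l))" by (rule sum.swap)
    also have "\<dots> = (\<Sum>i\<in>I. c i * (\<Sum>l<n. G $$ (r,l) * v i $ l))" by (simp add: sum_distrib_left)
    finally show ?thesis .
  qed
  also have "\<dots> = (\<Sum>i\<in>I. c i * (G *\<^sub>v v i) $ r)"
  proof (intro sum.cong refl)
    fix i assume i: "i \<in> I"
    have vi: "v i \<in> carrier_vec n" using v[OF i] .
    have "(G *\<^sub>v v i) $ r = (\<Sum>l<n. G $$ (r,l) * v i $ l)"
      using G vi r by (auto simp: scalar_prod_def lessThan_atLeast0 intro!: sum.cong)
    thus "c i * (\<Sum>l<n. G $$ (r,l) * v i $ l) = c i * (G *\<^sub>v v i) $ r" by simp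
  qed
  finally show ?thesis .
qed

lemma eig_indep: fixes m :: nat and G :: "complex mat" assumes G: "G \<in> carrier_mat n n"
  and v: "\<And>i. i < m \<Longrightarrow> v i \<in> carrier_vec n \<and> v i \<noteq> 0\<^sub>v n \<and> G *\<^sub>v v i = lam i \<cdot>\<^sub>v v i"
  and inj: "inj_on lam {..<m}"
  shows "(\<forall>r<n. (\<Sum>i<m. c i * v i $ r) = 0) \<Longrightarrow> \<forall>i<m. c i = 0"
  using v inj
proof (induct m arbitrary: c)
  case 0 thus ?case by simp
next
  case (Suc m c)
  note vv = Suc(3)
  have inj': "inj_on lam {..<m}" using Suc(4) by (auto simp: inj_on_def)
  have G0: "\<forall>r<n. (\<Sum>i<Suc m. (c i * lam i) * v i $ r) = 0"
  proof (intro allI impI)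
    fix r assume r: "r < n"
    have "(\<Sum>i<Suc m. (c i * lam i) * v i $ r) = (\<Sum>i<Suc m. c i * (G *\<^sub>v v i) $ r)"
    proof (intro sum.cong refl)
      fix i assume "i \<in> {..<Suc m}"
      with vv[of i] r show "(c i * lam i) * v i $ r = c i * (G *\<^sub>v v i) $ r" by (auto simp: algebra_simps)
    qed
    also have "\<dots> = (\<Sum>l<n. G $$ (r,l) * (\<Sum>i<Suc m. c i * v i $ l))"
      by (rule mat_vec_sum[OF G _ _ r, symmetric]) (use vv in auto)
    also have "\<dots> = 0" using Suc(2) by simp
    finally show "(\<Sum>i<Suc m. (c i * lam i) * v i $ r) = 0" .
  qed
  define d where "d i = c i * (lam i - lam m)" for i
  have "\<forall>r<n. (\<Sum>i<m. d i * v i $ r) = 0"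
  proof (intro allI impI)
    fix r assume r: "r < n"
    have "(\<Sum>i<Suc m. d i * v i $ r) = (\<Sum>i<Suc m. (c i * lam i) * v i $ r) - lam m * (\<Sum>i<Suc m. c i * v i $ r)"
      unfolding d_def by (simp add: sum_distrib_left sum_subtractf[symmetric] algebra_simps)
    also have "\<dots> = 0" using G0 Suc(2) r by simp
    finally show "(\<Sum>i<m. d i * v i $ r) = 0" unfolding d_def by simp
  qed
  from Suc(1)[OF this _ inj'] vv have dz: "\<forall>i<m. d i = 0" by simp
  have cz: "\<forall>i<m. c i = 0"
  proof (intro allI impI)
    fix i assume i: "i < m"
    have "lam i \<noteq> lam m" using Suc(4) i unfolding inj_on_def by force
    thus "c i = 0" using dz i unfolding d_def by auto
  qed
  have "\<forall>r<n. c m * v m $ r = 0" using Suc(2) cz by simp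
  moreover obtain r where r: "r < n" "v m $ r \<noteq> 0"
  proof -
    have "v m \<noteq> 0\<^sub>v n" "v m \<in> carrier_vec n" using vv by auto
    thus ?thesis using that by (metis eq_vecI carrier_vecD index_zero_vec)
  qed
  ultimately have "c m = 0" by auto
  thus ?case using cz less_Suc_eq by auto
qed

lemma eig_basis: fixes G :: "complex mat" assumes G: "G \<in> carrier_mat n n"
  and v: "\<And>i. i < n \<Longrightarrow> v i \<in> carrier_vec n \<and> v i \<noteq> 0\<^sub>v n \<and> G *\<^sub>v v i = lam i \<cdot>\<^sub>v v i"
  and inj: "inj_on lam {..<n}"
  shows "\<exists>h. h \<in> carrier_mat n n \<and> invertible_mat h \<and> h * G * minv h = mat_diag n lam"
proof -
  define P where "P = Matrix.mat n n (\<lambda>(r,i). v i $ r)"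
  have P: "P \<in> carrier_mat n n" unfolding P_def by simp
  have colP: "col P i = v i" if i: "i < n" for i
  proof -
    have "v i \<in> carrier_vec n" using v[OF i] by blast
    thus ?thesis unfolding P_def using i by (intro eq_vecI) auto
  qed
  have "det P \<noteq> 0"
  proof
    assume "det P = 0"
    then obtain c where c: "c \<in> carrier_vec n" "c \<noteq> 0\<^sub>v n" "P *\<^sub>v c = 0\<^sub>v n"
      using det_0_iff_vec_prod_zero[OF P] by blast
    have "\<forall>r<n. (\<Sum>i<n. (c $ i) * v i $ r) = 0"
    proof (intro allI impI)
      fix r assume r: "r < n"
      have "(P *\<^sub>v c) $ r = (\<Sum>i<n. (c $ i) * v i $ r)" using r c(1) unfolding P_def mult_mat_vec_def
        by (simp add: scalar_prod_def lessThan_atLeast0 mult.commute)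
      thus "(\<Sum>i<n. (c $ i) * v i $ r) = 0" using c r by simp
    qed
    from eig_indep[OF G v inj this] have "\<forall>i<n. c $ i = 0" by auto
    hence "c = 0\<^sub>v n" using c by (intro eq_vecI) auto
    thus False using c by simp
  qed
  from det_non_zero_imp_unit[OF P this, of "()"]
  obtain Q where Q: "Q \<in> carrier_mat n n" and QP: "Q * P = 1\<^sub>m n" and PQ: "P * Q = 1\<^sub>m n"
    unfolding Units_def ring_mat_simps by auto
  have mQ: "minv Q = P" by (rule minv_unique[OF Q P QP PQ])
  have invQ: "invertible_mat Q" unfolding invertible_mat_def inverts_mat_def square_mat.simps
    using Q P QP PQ by (auto intro!: exI[of _ P])
  have dd: "dim_col (mat_diag n lam) = n" "dim_row (mat_diag n lam) = n" by (simp_all add: mat_diag_def)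
  have GP: "G * P = P * mat_diag n lam"
  proof (rule eq_matI)
    fix r i assume r: "r < dim_row (P * mat_diag n lam)" and i: "i < dim_col (P * mat_diag n lam)"
    hence r: "r < n" and i: "i < n" using P mat_diag_dim[of n lam] by auto
    have "(G * P) $$ (r,i) = (G *\<^sub>v v i) $ r" using G P r i colP[OF i] by simp
    also have "\<dots> = lam i * v i $ r" using v[OF i] r by auto
    finally show "(G * P) $$ (r,i) = (P * mat_diag n lam) $$ (r,i)"
      unfolding mat_diag_mult_right[OF P] using r i by (simp add: P_def)
  qed (use G P dd in auto)
  have "Q * G * minv Q = Q * (G * P)" unfolding mQ using Q G P by simp
  also have "\<dots> = (Q * P) * mat_diag n lam" unfolding GP using assoc_mult_mat[OF Q P mat_diag_dim[of n lam]] by simp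
  also have "\<dots> = mat_diag n lam" unfolding QP using dd by simp
  finally show ?thesis using Q invQ by blast
qed



lemma mm_assoc_vec[simp]: assumes "dim_col A = dim_row B" "dim_col B = dim_vec v"
  shows "(A * B) *\<^sub>v v = A *\<^sub>v (B *\<^sub>v v)"
proof -
  have a: "A \<in> carrier_mat (dim_row A) (dim_col A)" by (rule carrier_matI) auto
  have b: "B \<in> carrier_mat (dim_col A) (dim_col B)" using assms(1) by (intro carrier_matI) auto
  have v: "v \<in> carrier_vec (dim_col B)" using assms(2) by (intro carrier_vecI) auto
  show ?thesis by (rule assoc_mult_mat_vec[OF a b v])
qed

lemma smult_mv[simp]: assumes "dim_vec v = dim_col A" shows "(c \<cdot>\<^sub>m A) *\<^sub>v v = (c::complex) \<cdot>\<^sub>v (A *\<^sub>v v)"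
proof -
  have a: "A \<in> carrier_mat (dim_row A) (dim_col A)" by (rule carrier_matI) auto
  have v: "v \<in> carrier_vec (dim_col A)" using assms by (intro carrier_vecI) auto
  show ?thesis by (rule smult_mat_mult_vec[OF a v])
qed

lemma mv_smult[simp]: assumes "dim_vec v = dim_col A" shows "A *\<^sub>v (c \<cdot>\<^sub>v v) = (c::complex) \<cdot>\<^sub>v (A *\<^sub>v v)"
proof -
  have a: "A \<in> carrier_mat (dim_row A) (dim_col A)" by (rule carrier_matI) auto
  have v: "v \<in> carrier_vec (dim_col A)" using assms by (intro carrier_vecI) auto
  show ?thesis by (rule mult_mat_vec[OF a v])
qed

lemma mv_add[simp]: assumes "dim_vec v = dim_col A" "dim_vec w = dim_col A" shows "A *\<^sub>v (v + w) = A *\<^sub>v v + (A :: complex mat) *\<^sub>v w"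
proof -
  have a: "A \<in> carrier_mat (dim_row A) (dim_col A)" by (rule carrier_matI) auto
  have v: "v \<in> carrier_vec (dim_col A)" "w \<in> carrier_vec (dim_col A)" using assms by (auto intro: carrier_vecI)
  show ?thesis by (rule mult_add_distrib_mat_vec[OF a v])
qed

lemma mv_minus[simp]: assumes "dim_vec v = dim_col A" "dim_vec w = dim_col A" shows "A *\<^sub>v (v - w) = A *\<^sub>v v - (A :: complex mat) *\<^sub>v w"
proof -
  have a: "A \<in> carrier_mat (dim_row A) (dim_col A)" by (rule carrier_matI) auto
  have v: "v \<in> carrier_vec (dim_col A)" "w \<in> carrier_vec (dim_col A)" using assms by (auto intro: carrier_vecI)
  show ?thesis by (rule mult_minus_distrib_mat_vec[OF a v])
qed

lemma minus_mv[simp]: assumes "dim_row B = dim_row A" "dim_col B = dim_col A" "dim_vec v = dim_col A"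
  shows "(A - B) *\<^sub>v v = A *\<^sub>v v - (B :: complex mat) *\<^sub>v v"
proof -
  have a: "A \<in> carrier_mat (dim_row A) (dim_col A)" by (rule carrier_matI) auto
  have b: "B \<in> carrier_mat (dim_row A) (dim_col A)" using assms by (intro carrier_matI) auto
  have v: "v \<in> carrier_vec (dim_col A)" using assms by (intro carrier_vecI) auto
  show ?thesis by (rule minus_mult_distrib_mat_vec[OF a b v])
qed

lemma plus_mv[simp]: assumes "dim_row B = dim_row A" "dim_col B = dim_col A" "dim_vec v = dim_col A"
  shows "(A + B) *\<^sub>v v = A *\<^sub>v v + (B :: complex mat) *\<^sub>v v"
proof -
  have a: "A \<in> carrier_mat (dim_row A) (dim_col A)" by (rule carrier_matI) auto
  have b: "B \<in> carrier_mat (dim_row A) (dim_col A)" using assms by (intro carrier_matI) auto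
  have v: "v \<in> carrier_vec (dim_col A)" using assms by (intro carrier_vecI) auto
  show ?thesis by (rule add_mult_distrib_mat_vec[OF a b v])
qed

lemma mv_cong: "M = N \<Longrightarrow> M *\<^sub>v v = N *\<^sub>v v" by simp

lemma colC_mv: "dim_vec u = 1 \<Longrightarrow> colC C p *\<^sub>v u = (u $ 0) \<cdot>\<^sub>v col C (p - 1)"
  unfolding colC_def by (intro eq_vecI) (auto simp: mat_of_cols_def scalar_prod_def)

lemma vec_row_self[simp]: "vec (dim_col D) (($) (row D q)) = row D q"
  by (intro eq_vecI) (auto simp: row_def)

lemma rowD_mv: "dim_vec x = dim_col D \<Longrightarrow> rowD D p *\<^sub>v x = vec 1 (\<lambda>_. row D (p - 1) \<bullet> x)"
  unfolding rowD_def by (intro eq_vecI) (auto simp: mat_of_rows_def)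

lemma dims_colC[simp]: "dim_row (colC C p) = dim_row C" "dim_col (colC C p) = 1"
  unfolding colC_def by auto
lemma dims_rowD[simp]: "dim_row (rowD D p) = 1" "dim_col (rowD D p) = dim_col D"
  unfolding rowD_def by auto



lemma C_mv2: fixes C :: "complex mat" assumes C: "C \<in> carrier_mat k 2" and w: "w \<in> carrier_vec 2"
  shows "C *\<^sub>v w = (w $ 0) \<cdot>\<^sub>v col C 0 + (w $ 1) \<cdot>\<^sub>v col C 1"
  using C w by (intro eq_vecI) (auto simp: scalar_prod_def numeral_2_eq_2 mult.commute)

lemma D_mv2: fixes D :: "complex mat" assumes D: "D \<in> carrier_mat 2 k" and x: "x \<in> carrier_vec k"
  shows "(D *\<^sub>v x) $ 0 = row D 0 \<bullet> x" "(D *\<^sub>v x) $ 1 = row D 1 \<bullet> x"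
  using D x by auto

lemma vec_rearr: fixes X :: "complex vec" assumes "X \<in> carrier_vec n" "Y \<in> carrier_vec n" "P \<in> carrier_vec n" "Q \<in> carrier_vec n"
  and "X - Y + (P + Q) = 0\<^sub>v n" shows "X = Y - P - Q"
proof (rule eq_vecI)
  fix i assume "i < dim_vec (Y - P - Q)"
  hence i: "i < n" using assms by simp
  have "(X - Y + (P + Q)) $ i = 0" using assms(5) i by simp
  hence h: "X $ i - Y $ i + (P $ i + Q $ i) = 0" using assms(1-4) i by simp
  have "X $ i = (X $ i - Y $ i + (P $ i + Q $ i)) + Y $ i - P $ i - Q $ i" by (simp add: algebra_simps)
  also have "\<dots> = Y $ i - P $ i - Q $ i" unfolding h by simp
  finally show "X $ i = (Y - P - Q) $ i" using assms(1-4) i by simp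
qed (use assms in simp)

lemma no_commuting_surj:
  fixes A B C :: "complex mat"
  assumes A: "A \<in> carrier_mat k k" and B: "B \<in> carrier_mat k k" and k: "k \<ge> 1"
  and AB: "A * B = B * A" and C0: "C = 0\<^sub>m k 2"
  and surj: "\<forall>z w. \<forall>y \<in> carrier_vec k. \<exists>x1 \<in> carrier_vec k. \<exists>x2 \<in> carrier_vec k. \<exists>x3 \<in> carrier_vec 2.
                 (A - z \<cdot>\<^sub>m 1\<^sub>m k) *\<^sub>v x1 + (B - w \<cdot>\<^sub>m 1\<^sub>m k) *\<^sub>v x2 + C *\<^sub>v x3 = y"
  shows False
proof -
  define At where "At = transpose_mat A"
  define Bt where "Bt = transpose_mat B"
  have At: "At \<in> carrier_mat k k" and Bt: "Bt \<in> carrier_mat k k" unfolding At_def Bt_def using A B by auto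
  have dAB[simp]: "dim_row At = k" "dim_col At = k" "dim_row Bt = k" "dim_col Bt = k"
    "dim_row A = k" "dim_col A = k" "dim_row B = k" "dim_col B = k" using At Bt A B by auto
  have AtBt: "At * Bt = Bt * At" unfolding At_def Bt_def
    using transpose_mult[OF A B] transpose_mult[OF B A] AB by simp
  have u: "(unit_vec k 0 :: complex vec) \<in> carrier_vec k" "(unit_vec k 0 :: complex vec) \<noteq> 0\<^sub>v k"
  proof -
    show "(unit_vec k 0 :: complex vec) \<in> carrier_vec k" by simp
    have "(unit_vec k 0 :: complex vec) $ 0 = 1" using k by simp
    moreover have "(0\<^sub>v k :: complex vec) $ 0 = 0" using k by simp
    ultimately show "(unit_vec k 0 :: complex vec) \<noteq> 0\<^sub>v k" by force
  qed
  obtain f0 z where f0: "kcl At (unit_vec k 0) k f0" "f0 \<noteq> 0\<^sub>v k" "At *\<^sub>v f0 = z \<cdot>\<^sub>v f0"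
    using krylov_eigen[OF At u] by blast
  have f0c: "f0 \<in> carrier_vec k" using f0(1) unfolding kcl_def by auto
  hence df0[simp]: "dim_vec f0 = k" by auto
  obtain f w where f: "kcl Bt f0 k f" "f \<noteq> 0\<^sub>v k" "Bt *\<^sub>v f = w \<cdot>\<^sub>v f"
    using krylov_eigen[OF Bt f0c f0(2)] by blast
  have fc: "f \<in> carrier_vec k" using f(1) unfolding kcl_def by auto
  hence df[simp]: "dim_vec f = k" by auto
  define L where "L = At - z \<cdot>\<^sub>m 1\<^sub>m k"
  have L: "L \<in> carrier_mat k k" unfolding L_def by (intro minus_carrier_mat smult_carrier_mat one_carrier_mat)
  have "L *\<^sub>v f = 0\<^sub>v k"
  proof -
    have "\<forall>i. L *\<^sub>v ((Bt ^\<^sub>m i) *\<^sub>v f0) = 0\<^sub>v k"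
    proof
      fix i
      have Bi: "Bt ^\<^sub>m i \<in> carrier_mat k k" using Bt by simp
      have "At *\<^sub>v ((Bt ^\<^sub>m i) *\<^sub>v f0) = (At * Bt ^\<^sub>m i) *\<^sub>v f0" using At Bi f0c by simp
      also have "At * Bt ^\<^sub>m i = Bt ^\<^sub>m i * At" by (rule pow_mat_commute[OF Bt At AtBt])
      also have "(Bt ^\<^sub>m i * At) *\<^sub>v f0 = z \<cdot>\<^sub>v ((Bt ^\<^sub>m i) *\<^sub>v f0)" using At Bi f0c f0(3) mult_mat_vec[OF Bi f0c] by simp
      finally have e: "At *\<^sub>v ((Bt ^\<^sub>m i) *\<^sub>v f0) = z \<cdot>\<^sub>v ((Bt ^\<^sub>m i) *\<^sub>v f0)" .
      have "L *\<^sub>v ((Bt ^\<^sub>m i) *\<^sub>v f0) = At *\<^sub>v ((Bt ^\<^sub>m i) *\<^sub>v f0) - z \<cdot>\<^sub>v ((Bt ^\<^sub>m i) *\<^sub>v f0)"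
        unfolding L_def using At Bi f0c by simp
      also have "\<dots> = 0\<^sub>v k" unfolding e using Bi f0c by (intro eq_vecI) auto
      finally show "L *\<^sub>v ((Bt ^\<^sub>m i) *\<^sub>v f0) = 0\<^sub>v k" .
    qed
    thus ?thesis using f(1) L unfolding kcl_def by blast
  qed
  hence Atf: "At *\<^sub>v f = z \<cdot>\<^sub>v f"
  proof -
    assume h: "L *\<^sub>v f = 0\<^sub>v k"
    have "L *\<^sub>v f = At *\<^sub>v f - z \<cdot>\<^sub>v f" unfolding L_def using At fc by simp
    with h have h2: "At *\<^sub>v f - z \<cdot>\<^sub>v f = 0\<^sub>v k" by simp
    show ?thesis
    proof (rule eq_vecI)
      fix i assume "i < dim_vec (z \<cdot>\<^sub>v f)"
      hence i: "i < k" by simp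
      have "(At *\<^sub>v f - z \<cdot>\<^sub>v f) $ i = 0" unfolding h2 using i by simp
      thus "(At *\<^sub>v f) $ i = (z \<cdot>\<^sub>v f) $ i" using i by simp
    qed simp

  qed
  obtain p where p: "p < k" "f $ p \<noteq> 0"
  proof -
    have "\<not> (\<forall>p<k. f $ p = 0)"
    proof
      assume h: "\<forall>p<k. f $ p = 0"
      have "f = 0\<^sub>v k" using h by (intro eq_vecI) auto
      with f(2) show False by simp
    qed
    thus ?thesis using that by blast
  qed
  from surj obtain x1 x2 x3 where x: "x1 \<in> carrier_vec k" "x2 \<in> carrier_vec k" "x3 \<in> carrier_vec 2"
    and eq: "(A - z \<cdot>\<^sub>m 1\<^sub>m k) *\<^sub>v x1 + (B - w \<cdot>\<^sub>m 1\<^sub>m k) *\<^sub>v x2 + C *\<^sub>v x3 = unit_vec k p"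
    by (meson unit_vec_carrier)
  have t1: "f \<bullet> ((A - z \<cdot>\<^sub>m 1\<^sub>m k) *\<^sub>v x1) = 0"
  proof -
    have "f \<bullet> ((A - z \<cdot>\<^sub>m 1\<^sub>m k) *\<^sub>v x1) = f \<bullet> (A *\<^sub>v x1) - z * (f \<bullet> x1)"
      using A x fc by (simp add: scalar_prod_minus_distrib[of f k])
    also have "f \<bullet> (A *\<^sub>v x1) = (At *\<^sub>v f) \<bullet> x1" unfolding At_def by (rule transpose_vec_mult_scalar[OF A x(1) fc, symmetric])
    finally show ?thesis unfolding Atf using fc x by simp
  qed
  have t2: "f \<bullet> ((B - w \<cdot>\<^sub>m 1\<^sub>m k) *\<^sub>v x2) = 0"
  proof -
    have "f \<bullet> ((B - w \<cdot>\<^sub>m 1\<^sub>m k) *\<^sub>v x2) = f \<bullet> (B *\<^sub>v x2) - w * (f \<bullet> x2)"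
      using B x fc by (simp add: scalar_prod_minus_distrib[of f k])
    also have "f \<bullet> (B *\<^sub>v x2) = (Bt *\<^sub>v f) \<bullet> x2" unfolding Bt_def by (rule transpose_vec_mult_scalar[OF B x(2) fc, symmetric])
    finally show ?thesis unfolding f(3) using fc x by simp
  qed
  have t3: "C *\<^sub>v x3 = 0\<^sub>v k" unfolding C0 using x(3) by (intro eq_vecI) (auto simp: scalar_prod_def)
  have "f $ p = f \<bullet> unit_vec k p" using p by simp
  also have "\<dots> = f \<bullet> ((A - z \<cdot>\<^sub>m 1\<^sub>m k) *\<^sub>v x1) + f \<bullet> ((B - w \<cdot>\<^sub>m 1\<^sub>m k) *\<^sub>v x2)"
    unfolding eq[symmetric] t3 using A B x fc
    by (simp add: scalar_prod_add_distrib[of f k])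
  also have "\<dots> = 0" using t1 t2 by simp
  finally show False using p by simp
qed

lemma omega_inj: assumes k: "k \<ge> 1" and p: "p < k" and q: "q < k" and eq: "omega_r k (p + 1) = omega_r k (q + 1)"
  shows "p = q"
proof -
  define x where "x = 2 * pi * real (p + 1) / real k - 2 * pi * real (q + 1) / real k"
  have "cis x = omega_r k (p + 1) / omega_r k (q + 1)" unfolding x_def omega_r_def by (simp add: cis_divide)
  also have "\<dots> = 1" unfolding eq by (simp add: omega_r_def)
  finally have "Re (cis x) = 1" by simp
  hence "cos x = 1" by simp
  then obtain n :: int where n: "x = real_of_int n * 2 * pi" using cos_one_2pi_int by blast
  have kp: "real k > 0" using k by simp
  have "real (p + 1) - real (q + 1) = x * real k / (2 * pi)" unfolding x_def using kp by (simp add: field_simps)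
  also have "\<dots> = real_of_int n * real k" unfolding n by simp
  finally have "real (p + 1) - real (q + 1) = real_of_int n * real k" .
  hence ri: "real_of_int (int p - int q) = real_of_int (n * int k)" by simp
  hence ii: "int p - int q = n * int k" by (simp only: of_int_eq_iff)
  show "p = q"
  proof (cases "n = 0")
    case True thus ?thesis using ii by simp
  next
    case False
    hence "\<bar>n * int k\<bar> \<ge> int k" using k by (simp add: abs_mult)
    moreover have "\<bar>int p - int q\<bar> < int k" using p q by auto
    ultimately show ?thesis using ii by simp
  qed
qed

theorem mainTheorem10:
  fixes k :: nat and j :: int and \<omega> :: real and A B C D g :: "complex mat"
  assumes "k \<ge> 1"
    and "even j" and "0 \<le> j" and "j < 2 * int k"
    and "- pi < \<omega>" and "\<omega> < pi"
    and "nonsingular_monad k A B C D"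
    and "symmetry_witness k j \<omega> A B C D g"
  shows "\<exists>h. h \<in> carrier_mat k k \<and> invertible_mat h \<and>
           h * bigG k j g A * minv h = Omega k j \<cdot>\<^sub>m mat_diag k (\<lambda>i. omega_r k (i + 1))"
proof -
  have A: "A \<in> carrier_mat k k" and Ainv: "invertible_mat A" and B: "B \<in> carrier_mat k k"
    and C: "C \<in> carrier_mat k 2" and D: "D \<in> carrier_mat 2 k"
    and comm: "A * B - B * A + C * D = 0\<^sub>m k k"
    and fr: "\<forall>z w. (\<forall>y \<in> carrier_vec k. \<exists>x1 \<in> carrier_vec k. \<exists>x2 \<in> carrier_vec k. \<exists>x3 \<in> carrier_vec 2.
                 (A - z \<cdot>\<^sub>m 1\<^sub>m k) *\<^sub>v x1 + (B - w \<cdot>\<^sub>m 1\<^sub>m k) *\<^sub>v x2 + C *\<^sub>v x3 = y) \<and>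
             (\<forall>x \<in> carrier_vec k. (A - z \<cdot>\<^sub>m 1\<^sub>m k) *\<^sub>v x = 0\<^sub>v k \<and> (B - w \<cdot>\<^sub>m 1\<^sub>m k) *\<^sub>v x = 0\<^sub>v k
                 \<and> D *\<^sub>v x = 0\<^sub>v 2 \<longrightarrow> x = 0\<^sub>v k)"
    using assms(7) unfolding nonsingular_monad_def by (simp_all only:) (elim conjE, assumption)
  define \<zeta> where "\<zeta> = expi (j * pi / k)"
  define \<xi> where "\<xi> = expi (pi / k)"
  define a where "a = expi (pi / (2 * real k)) * expi (3 * real_of_int j * pi / (4 * real k))"
  define b where "b = expi (pi / (2 * real k)) * expi (real_of_int j * pi / (4 * real k))"
  define e where "e = expi \<omega>"
  define e' where "e' = expi (- \<omega>)"
  define gi where "gi = minv g"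
  define Ai where "Ai = minv A"
  have g: "g \<in> carrier_mat k k" and ginv: "invertible_mat g"
    and W1: "\<zeta> \<cdot>\<^sub>m A = g * A * gi"
    and W2: "\<xi> \<cdot>\<^sub>m B = g * (B - colC C 1 * rowD D 1 * Ai) * gi"
    and W3: "b \<cdot>\<^sub>m colC C 1 = e \<cdot>\<^sub>m (g * colC C 2)"
    and W4: "a \<cdot>\<^sub>m colC C 2 = e' \<cdot>\<^sub>m (g * A * colC C 1)"
    and W5: "a \<cdot>\<^sub>m rowD D 1 = e' \<cdot>\<^sub>m (rowD D 2 * gi)"
    and W6: "b \<cdot>\<^sub>m rowD D 2 = e \<cdot>\<^sub>m (rowD D 1 * Ai * gi)"
    using assms(8) unfolding symmetry_witness_def \<zeta>_def \<xi>_def a_def b_def e_def e'_def gi_def Ai_def by (simp_all only:)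
  note gp = minv_props[OF g ginv, folded gi_def]
  note Ap = minv_props[OF A Ainv, folded Ai_def]
  define c1 where "c1 = col C 0"
  define c2 where "c2 = col C 1"
  define d1 where "d1 = row D 0"
  define d2 where "d2 = row D 1"
  have dims[simp]: "dim_row A = k" "dim_col A = k" "dim_row B = k" "dim_col B = k"
    "dim_row g = k" "dim_col g = k" "dim_row gi = k" "dim_col gi = k" "dim_row Ai = k" "dim_col Ai = k"
    "dim_row C = k" "dim_col C = 2" "dim_row D = 2" "dim_col D = k"
    "dim_vec c1 = k" "dim_vec c2 = k" "dim_vec d1 = k" "dim_vec d2 = k"
    using A B g gp Ap C D unfolding c1_def c2_def d1_def d2_def by auto
  have inv_vec: "\<And>(X::complex mat) Y y. X * Y = 1\<^sub>m k \<Longrightarrow> dim_col X = k \<Longrightarrow> dim_row Y = k \<Longrightarrow> dim_col Y = k \<Longrightarrow> dim_vec y = k \<Longrightarrow> X *\<^sub>v (Y *\<^sub>v y) = y"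
  proof -
    fix X Y :: "complex mat" and y :: "complex vec"
    assume xy: "X * Y = 1\<^sub>m k" "dim_col X = k" "dim_row Y = k" "dim_col Y = k" "dim_vec y = k"
    have "X *\<^sub>v (Y *\<^sub>v y) = (X * Y) *\<^sub>v y" by (rule mm_assoc_vec[symmetric]) (use xy in simp_all)
    also have "\<dots> = y" unfolding xy(1) using xy(5) by (intro eq_vecI) auto
    finally show "X *\<^sub>v (Y *\<^sub>v y) = y" .
  qed
  have gig: "\<And>y. dim_vec y = k \<Longrightarrow> gi *\<^sub>v (g *\<^sub>v y) = y" by (rule inv_vec) (use gp in simp_all)
  have ggi: "\<And>y. dim_vec y = k \<Longrightarrow> g *\<^sub>v (gi *\<^sub>v y) = y" by (rule inv_vec) (use gp in simp_all)
  have AiA: "\<And>y. dim_vec y = k \<Longrightarrow> Ai *\<^sub>v (A *\<^sub>v y) = y" by (rule inv_vec) (use Ap in simp_all)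
  have AAi: "\<And>y. dim_vec y = k \<Longrightarrow> A *\<^sub>v (Ai *\<^sub>v y) = y" by (rule inv_vec) (use Ap in simp_all)
  define u1 :: "complex vec" where "u1 = vec 1 (\<lambda>_. 1)"
  have Wv1: "\<And>y. dim_vec y = k \<Longrightarrow> g *\<^sub>v (A *\<^sub>v y) = \<zeta> \<cdot>\<^sub>v (A *\<^sub>v (g *\<^sub>v y))"
  proof -
    fix y :: "complex vec" assume y: "dim_vec y = k"
    from mv_cong[OF W1, of "g *\<^sub>v y"] show "g *\<^sub>v (A *\<^sub>v y) = \<zeta> \<cdot>\<^sub>v (A *\<^sub>v (g *\<^sub>v y))"
      using y gig by simp
  qed
  have Wv2: "\<And>y. dim_vec y = k \<Longrightarrow> \<xi> \<cdot>\<^sub>v (B *\<^sub>v (g *\<^sub>v y)) = g *\<^sub>v (B *\<^sub>v y) - (d1 \<bullet> (Ai *\<^sub>v y)) \<cdot>\<^sub>v (g *\<^sub>v c1)"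
  proof -
    fix y :: "complex vec" assume y: "dim_vec y = k"
    from mv_cong[OF W2, of "g *\<^sub>v y"] show "\<xi> \<cdot>\<^sub>v (B *\<^sub>v (g *\<^sub>v y)) = g *\<^sub>v (B *\<^sub>v y) - (d1 \<bullet> (Ai *\<^sub>v y)) \<cdot>\<^sub>v (g *\<^sub>v c1)"
      using y gig by (simp add: colC_mv rowD_mv c1_def d1_def)
  qed
  have Wv3: "b \<cdot>\<^sub>v c1 = e \<cdot>\<^sub>v (g *\<^sub>v c2)"
    using mv_cong[OF W3, of u1] by (simp add: colC_mv u1_def c1_def c2_def)
  have Wv4: "a \<cdot>\<^sub>v c2 = e' \<cdot>\<^sub>v (g *\<^sub>v (A *\<^sub>v c1))"
    using mv_cong[OF W4, of u1] by (simp add: colC_mv u1_def c1_def c2_def)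
  have Wv5: "\<And>x. dim_vec x = k \<Longrightarrow> a * (d1 \<bullet> x) = e' * (d2 \<bullet> (gi *\<^sub>v x))"
  proof -
    fix x :: "complex vec" assume x: "dim_vec x = k"
    from arg_cong[OF mv_cong[OF W5, of x], of "\<lambda>v. v $ 0"]
    show "a * (d1 \<bullet> x) = e' * (d2 \<bullet> (gi *\<^sub>v x))" using x by (simp add: rowD_mv d1_def d2_def)
  qed
  have Wv6: "\<And>x. dim_vec x = k \<Longrightarrow> b * (d2 \<bullet> x) = e * (d1 \<bullet> (Ai *\<^sub>v (gi *\<^sub>v x)))"
  proof -
    fix x :: "complex vec" assume x: "dim_vec x = k"
    from arg_cong[OF mv_cong[OF W6, of x], of "\<lambda>v. v $ 0"]
    show "b * (d2 \<bullet> x) = e * (d1 \<bullet> (Ai *\<^sub>v (gi *\<^sub>v x)))" using x by (simp add: rowD_mv d1_def d2_def)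
  qed
  have Mv: "\<And>y. dim_vec y = k \<Longrightarrow> A *\<^sub>v (B *\<^sub>v y) = B *\<^sub>v (A *\<^sub>v y) - (d1 \<bullet> y) \<cdot>\<^sub>v c1 - (d2 \<bullet> y) \<cdot>\<^sub>v c2"
  proof -
    fix y :: "complex vec" assume y: "dim_vec y = k"
    have yc: "y \<in> carrier_vec k" using y by (rule carrier_vecI)
    have "(A * B - B * A + C * D) *\<^sub>v y = 0\<^sub>v k" unfolding comm using yc by (intro eq_vecI) auto
    moreover have "(A * B - B * A + C * D) *\<^sub>v y = A *\<^sub>v (B *\<^sub>v y) - B *\<^sub>v (A *\<^sub>v y) + C *\<^sub>v (D *\<^sub>v y)"
      using y by simp
    moreover have "C *\<^sub>v (D *\<^sub>v y) = (d1 \<bullet> y) \<cdot>\<^sub>v c1 + (d2 \<bullet> y) \<cdot>\<^sub>v c2"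
      using C_mv2[OF C, of "D *\<^sub>v y"] D_mv2[OF D yc] D yc unfolding c1_def c2_def d1_def d2_def by simp
    ultimately have eq: "A *\<^sub>v (B *\<^sub>v y) - B *\<^sub>v (A *\<^sub>v y) + ((d1 \<bullet> y) \<cdot>\<^sub>v c1 + (d2 \<bullet> y) \<cdot>\<^sub>v c2) = 0\<^sub>v k"
      by simp
    show "A *\<^sub>v (B *\<^sub>v y) = B *\<^sub>v (A *\<^sub>v y) - (d1 \<bullet> y) \<cdot>\<^sub>v c1 - (d2 \<bullet> y) \<cdot>\<^sub>v c2"
      by (rule vec_rearr[OF _ _ _ _ eq]) (auto intro!: carrier_vecI simp: y)
  qed
  have kpos: "real k > 0" using assms(1) by simp
  have nz[simp]: "\<zeta> \<noteq> 0" "\<xi> \<noteq> 0" "a \<noteq> 0" "b \<noteq> 0" "e \<noteq> 0" "e' \<noteq> 0"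
    unfolding \<zeta>_def \<xi>_def a_def b_def e_def e'_def by simp_all
  have ee': "e * e' = 1" unfolding e_def e'_def by (simp add: cis_mult)
  have ab: "a * b = \<xi> * \<zeta>"
  proof -
    have "a * b = cis (pi / (2 * real k) + 3 * real_of_int j * pi / (4 * real k) + (pi / (2 * real k) + real_of_int j * pi / (4 * real k)))"
      unfolding a_def b_def by (simp add: cis_mult)
    also have "\<dots> = cis (pi / real k + real_of_int j * pi / real k)"
      by (rule arg_cong[of _ _ cis]) (use kpos in \<open>simp add: field_simps\<close>)
    also have "\<dots> = \<xi> * \<zeta>" unfolding \<xi>_def \<zeta>_def by (simp add: cis_mult)
    finally show ?thesis .
  qed
  define c0 where "c0 = expi (- (real_of_int j * pi / (2 * real k)))"
  define G where "G = bigG k j g A"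
  have Gdef: "G = c0 \<cdot>\<^sub>m (g * g * A)" unfolding G_def bigG_def c0_def ..
  have Gdims[simp]: "dim_row G = k" "dim_col G = k" unfolding Gdef by simp_all
  have Gv: "\<And>y. dim_vec y = k \<Longrightarrow> G *\<^sub>v y = c0 \<cdot>\<^sub>v (g *\<^sub>v (g *\<^sub>v (A *\<^sub>v y)))"
    unfolding Gdef by simp
  have Ag: "\<And>y. dim_vec y = k \<Longrightarrow> A *\<^sub>v (g *\<^sub>v y) = (1 / \<zeta>) \<cdot>\<^sub>v (g *\<^sub>v (A *\<^sub>v y))"
    using Wv1 by (simp add: smult_smult_assoc)
  have V1: "\<And>y. dim_vec y = k \<Longrightarrow> G *\<^sub>v (g *\<^sub>v y) = (1 / \<zeta>) \<cdot>\<^sub>v (g *\<^sub>v (G *\<^sub>v y))"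
    using Gv Ag by (simp add: smult_smult_assoc mult.commute)
  have V1': "\<And>y. dim_vec y = k \<Longrightarrow> g *\<^sub>v (G *\<^sub>v y) = \<zeta> \<cdot>\<^sub>v (G *\<^sub>v (g *\<^sub>v y))"
    using V1 by (simp add: smult_smult_assoc)
  have V2: "\<And>y. dim_vec y = k \<Longrightarrow> G *\<^sub>v (A *\<^sub>v y) = (\<zeta> * \<zeta>) \<cdot>\<^sub>v (A *\<^sub>v (G *\<^sub>v y))"
    using Gv Wv1 by (simp add: smult_smult_assoc mult.commute mult.left_commute)
  have gc2: "g *\<^sub>v c2 = (b / e) \<cdot>\<^sub>v c1"
    using arg_cong[OF Wv3, of "\<lambda>v. (1 / e) \<cdot>\<^sub>v v"] by (simp add: smult_smult_assoc)
  have gAc1: "g *\<^sub>v (A *\<^sub>v c1) = (a / e') \<cdot>\<^sub>v c2"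
    using arg_cong[OF Wv4, of "\<lambda>v. (1 / e') \<cdot>\<^sub>v v"] by (simp add: smult_smult_assoc)
  have V5: "G *\<^sub>v c1 = (c0 * \<xi> * \<zeta>) \<cdot>\<^sub>v c1"
  proof -
    have "G *\<^sub>v c1 = (c0 * (a / e') * (b / e)) \<cdot>\<^sub>v c1" using Gv gAc1 gc2 by (simp add: smult_smult_assoc mult.assoc)
    also have "c0 * (a / e') * (b / e) = c0 * \<xi> * \<zeta>" using ab ee' by (simp add: field_simps)
    finally show ?thesis .
  qed
  have V6a: "\<And>x. dim_vec x = k \<Longrightarrow> d1 \<bullet> (G *\<^sub>v x) = (c0 / (\<xi> * \<zeta>)) * (d1 \<bullet> x)"
  proof -
    fix x :: "complex vec" assume x: "dim_vec x = k"
    define P where "P = d1 \<bullet> (g *\<^sub>v (g *\<^sub>v (A *\<^sub>v x)))"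
    define Q where "Q = d2 \<bullet> (g *\<^sub>v (A *\<^sub>v x))"
    define R where "R = d1 \<bullet> x"
    have s1: "b * Q = e * R" unfolding Q_def R_def using Wv6[of "g *\<^sub>v (A *\<^sub>v x)"] x gig AiA by simp
    have s2: "a * P = e' * Q" unfolding P_def Q_def using Wv5[of "g *\<^sub>v (g *\<^sub>v (A *\<^sub>v x))"] x gig by simp
    have "a * b * P = b * (a * P)" by simp
    also have "\<dots> = e' * (b * Q)" unfolding s2 by simp
    also have "\<dots> = (e * e') * R" unfolding s1 by simp
    finally have "a * b * P = R" unfolding ee' by simp
    hence "P = R / (\<xi> * \<zeta>)" unfolding ab by (simp add: field_simps)
    moreover have "d1 \<bullet> (G *\<^sub>v x) = c0 * P" unfolding P_def using Gv x by simp
    ultimately show "d1 \<bullet> (G *\<^sub>v x) = (c0 / (\<xi> * \<zeta>)) * (d1 \<bullet> x)" unfolding R_def by simp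
  qed
  have t1: "\<And>z. dim_vec z = k \<Longrightarrow> d2 \<bullet> z = (a / e') * (d1 \<bullet> (g *\<^sub>v z))"
  proof -
    fix z :: "complex vec" assume z: "dim_vec z = k"
    have "a * (d1 \<bullet> (g *\<^sub>v z)) = e' * (d2 \<bullet> z)" using Wv5[of "g *\<^sub>v z"] z gig by simp
    thus "d2 \<bullet> z = (a / e') * (d1 \<bullet> (g *\<^sub>v z))" by (simp add: field_simps)
  qed
  have V6b: "\<And>x. dim_vec x = k \<Longrightarrow> d2 \<bullet> (G *\<^sub>v x) = (c0 / \<xi>) * (d2 \<bullet> x)"
  proof -
    fix x :: "complex vec" assume x: "dim_vec x = k"
    have "d2 \<bullet> (G *\<^sub>v x) = (a / e') * (d1 \<bullet> (g *\<^sub>v (G *\<^sub>v x)))" using t1[of "G *\<^sub>v x"] x by simp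
    also have "d1 \<bullet> (g *\<^sub>v (G *\<^sub>v x)) = \<zeta> * (d1 \<bullet> (G *\<^sub>v (g *\<^sub>v x)))" using V1' x by simp
    also have "d1 \<bullet> (G *\<^sub>v (g *\<^sub>v x)) = (c0 / (\<xi> * \<zeta>)) * (d1 \<bullet> (g *\<^sub>v x))" using V6a x by simp
    also have "d1 \<bullet> (g *\<^sub>v x) = (e' / a) * (d2 \<bullet> x)" using t1[OF x] by (simp add: field_simps)
    finally show "d2 \<bullet> (G *\<^sub>v x) = (c0 / \<xi>) * (d2 \<bullet> x)" by (simp add: field_simps)
  qed
  have gB: "\<And>z. dim_vec z = k \<Longrightarrow> g *\<^sub>v (B *\<^sub>v z) = \<xi> \<cdot>\<^sub>v (B *\<^sub>v (g *\<^sub>v z)) + (d1 \<bullet> (Ai *\<^sub>v z)) \<cdot>\<^sub>v (g *\<^sub>v c1)"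
  proof -
    fix z :: "complex vec" assume z: "dim_vec z = k"
    have h: "\<xi> \<cdot>\<^sub>v (B *\<^sub>v (g *\<^sub>v z)) = g *\<^sub>v (B *\<^sub>v z) - (d1 \<bullet> (Ai *\<^sub>v z)) \<cdot>\<^sub>v (g *\<^sub>v c1)" by (rule Wv2[OF z])
    show "g *\<^sub>v (B *\<^sub>v z) = \<xi> \<cdot>\<^sub>v (B *\<^sub>v (g *\<^sub>v z)) + (d1 \<bullet> (Ai *\<^sub>v z)) \<cdot>\<^sub>v (g *\<^sub>v c1)"
    proof (rule eq_vecI)
      fix i assume "i < dim_vec (\<xi> \<cdot>\<^sub>v (B *\<^sub>v (g *\<^sub>v z)) + (d1 \<bullet> (Ai *\<^sub>v z)) \<cdot>\<^sub>v (g *\<^sub>v c1))"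
      hence i: "i < k" by simp
      have "(\<xi> \<cdot>\<^sub>v (B *\<^sub>v (g *\<^sub>v z))) $ i = (g *\<^sub>v (B *\<^sub>v z) - (d1 \<bullet> (Ai *\<^sub>v z)) \<cdot>\<^sub>v (g *\<^sub>v c1)) $ i"
        unfolding h ..
      thus "(g *\<^sub>v (B *\<^sub>v z)) $ i = (\<xi> \<cdot>\<^sub>v (B *\<^sub>v (g *\<^sub>v z)) + (d1 \<bullet> (Ai *\<^sub>v z)) \<cdot>\<^sub>v (g *\<^sub>v c1)) $ i"
        using i by simp
    qed simp
  qed
  have V3: "\<And>y. dim_vec y = k \<Longrightarrow> G *\<^sub>v (B *\<^sub>v y) = (\<xi> * \<xi>) \<cdot>\<^sub>v (B *\<^sub>v (G *\<^sub>v y))"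
  proof -
    fix y :: "complex vec" assume y: "dim_vec y = k"
    define X where "X = B *\<^sub>v (g *\<^sub>v (g *\<^sub>v (A *\<^sub>v y)))"
    define W where "W = g *\<^sub>v c1"
    define W2 where "W2 = g *\<^sub>v W"
    define s1 where "s1 = d1 \<bullet> y"
    define s2 where "s2 = d2 \<bullet> y"
    define t where "t = \<zeta> * (e' / a) * s2"
    have dX[simp]: "dim_vec X = k" "dim_vec W = k" "dim_vec W2 = k" unfolding X_def W_def W2_def by simp_all
    have AiGA: "Ai *\<^sub>v (g *\<^sub>v (A *\<^sub>v y)) = \<zeta> \<cdot>\<^sub>v (g *\<^sub>v y)" using Wv1[OF y] AiA y by simp
    have dg: "d1 \<bullet> (g *\<^sub>v y) = (e' / a) * s2" unfolding s2_def using t1[OF y] by (simp add: field_simps)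
    have h1: "g *\<^sub>v (B *\<^sub>v (A *\<^sub>v y)) = \<xi> \<cdot>\<^sub>v (B *\<^sub>v (g *\<^sub>v (A *\<^sub>v y))) + s1 \<cdot>\<^sub>v W"
      unfolding s1_def W_def using gB[of "A *\<^sub>v y"] y AiA by simp
    have h2: "g *\<^sub>v (B *\<^sub>v (g *\<^sub>v (A *\<^sub>v y))) = \<xi> \<cdot>\<^sub>v X + t \<cdot>\<^sub>v W"
      unfolding X_def W_def t_def using gB[of "g *\<^sub>v (A *\<^sub>v y)"] y AiGA dg by (simp add: mult.assoc)
    have h4: "g *\<^sub>v (A *\<^sub>v (B *\<^sub>v y)) = g *\<^sub>v (B *\<^sub>v (A *\<^sub>v y)) - s1 \<cdot>\<^sub>v W - s2 \<cdot>\<^sub>v ((b / e) \<cdot>\<^sub>v c1)"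
      unfolding Mv[OF y] W_def s1_def s2_def using y gc2 by simp
    have h5: "g *\<^sub>v (g *\<^sub>v (A *\<^sub>v (B *\<^sub>v y))) = g *\<^sub>v (g *\<^sub>v (B *\<^sub>v (A *\<^sub>v y))) - s1 \<cdot>\<^sub>v W2 - (s2 * (b / e)) \<cdot>\<^sub>v W"
      unfolding h4 W2_def W_def using y by (simp add: smult_smult_assoc)
    have h6: "g *\<^sub>v (g *\<^sub>v (B *\<^sub>v (A *\<^sub>v y))) = \<xi> \<cdot>\<^sub>v (\<xi> \<cdot>\<^sub>v X + t \<cdot>\<^sub>v W) + s1 \<cdot>\<^sub>v W2"
      unfolding h1 W2_def using y h2 by simp
    have L: "G *\<^sub>v (B *\<^sub>v y) = c0 \<cdot>\<^sub>v (\<xi> \<cdot>\<^sub>v (\<xi> \<cdot>\<^sub>v X + t \<cdot>\<^sub>v W) + s1 \<cdot>\<^sub>v W2 - s1 \<cdot>\<^sub>v W2 - (s2 * (b / e)) \<cdot>\<^sub>v W)"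
      using Gv[of "B *\<^sub>v y"] y h5 h6 by simp
    have R: "(\<xi> * \<xi>) \<cdot>\<^sub>v (B *\<^sub>v (G *\<^sub>v y)) = (\<xi> * \<xi> * c0) \<cdot>\<^sub>v X"
      unfolding X_def using Gv[OF y] y by (simp add: smult_smult_assoc)
    have sc: "\<xi> * t = s2 * (b / e)"
    proof -
      have "\<xi> * t = (\<xi> * \<zeta>) * e' * s2 / a" unfolding t_def by (simp add: field_simps)
      also have "\<dots> = b * (e * e') * s2 / e" unfolding ab[symmetric] by (simp add: field_simps)
      finally show ?thesis unfolding ee' by simp
    qed
    show "G *\<^sub>v (B *\<^sub>v y) = (\<xi> * \<xi>) \<cdot>\<^sub>v (B *\<^sub>v (G *\<^sub>v y))"
      unfolding L R
    proof (rule eq_vecI)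
      fix i assume "i < dim_vec ((\<xi> * \<xi> * c0) \<cdot>\<^sub>v X)"
      hence i: "i < k" by simp
      show "(c0 \<cdot>\<^sub>v (\<xi> \<cdot>\<^sub>v (\<xi> \<cdot>\<^sub>v X + t \<cdot>\<^sub>v W) + s1 \<cdot>\<^sub>v W2 - s1 \<cdot>\<^sub>v W2 - (s2 * (b / e)) \<cdot>\<^sub>v W)) $ i = ((\<xi> * \<xi> * c0) \<cdot>\<^sub>v X) $ i"
        using i sc[symmetric] by (simp add: algebra_simps)
    qed simp
  qed
  have surj: "\<forall>z w. \<forall>y \<in> carrier_vec k. \<exists>x1 \<in> carrier_vec k. \<exists>x2 \<in> carrier_vec k. \<exists>x3 \<in> carrier_vec 2.
                 (A - z \<cdot>\<^sub>m 1\<^sub>m k) *\<^sub>v x1 + (B - w \<cdot>\<^sub>m 1\<^sub>m k) *\<^sub>v x2 + C *\<^sub>v x3 = y"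
    using fr by blast
  have inj: "\<And>z w x. x \<in> carrier_vec k \<Longrightarrow> (A - z \<cdot>\<^sub>m 1\<^sub>m k) *\<^sub>v x = 0\<^sub>v k \<Longrightarrow> (B - w \<cdot>\<^sub>m 1\<^sub>m k) *\<^sub>v x = 0\<^sub>v k
                 \<Longrightarrow> D *\<^sub>v x = 0\<^sub>v 2 \<Longrightarrow> x = 0\<^sub>v k"
    using fr by blast
  have c1nz: "c1 \<noteq> 0\<^sub>v k"
  proof
    assume c10: "c1 = 0\<^sub>v k"
    have "a \<cdot>\<^sub>v c2 = 0\<^sub>v k" unfolding Wv4 c10 using A g by (intro eq_vecI) auto
    hence c20: "c2 = 0\<^sub>v k"
    proof -
      assume h: "a \<cdot>\<^sub>v c2 = 0\<^sub>v k"
      show ?thesis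
      proof (rule eq_vecI)
        fix i assume "i < dim_vec (0\<^sub>v k :: complex vec)"
        hence i: "i < k" by simp
        have "(a \<cdot>\<^sub>v c2) $ i = 0" unfolding h using i by simp
        thus "c2 $ i = (0\<^sub>v k :: complex vec) $ i" using i by simp
      qed simp
    qed
    have C0: "C = 0\<^sub>m k 2"
    proof (rule eq_matI)
      fix i p assume i: "i < dim_row (0\<^sub>m k 2 :: complex mat)" and p: "p < dim_col (0\<^sub>m k 2 :: complex mat)"
      hence i: "i < k" and p: "p = 0 \<or> p = 1" by auto
      have "c1 $ i = 0" "c2 $ i = 0" unfolding c10 c20 using i by simp_all
      hence "C $$ (i, 0) = 0" "C $$ (i, 1) = 0" unfolding c1_def c2_def using i C by auto
      thus "C $$ (i, p) = (0\<^sub>m k 2 :: complex mat) $$ (i, p)" using p i by auto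
    qed simp_all
    have AB: "A * B = B * A"
    proof (rule eq_matI)
      fix i j assume i: "i < dim_row (B * A)" and j: "j < dim_col (B * A)"
      hence i: "i < k" and j: "j < k" by auto
      have "(A * B - B * A + C * D) $$ (i,j) = 0" unfolding comm using i j by simp
      moreover have "(C * D) $$ (i,j) = 0" unfolding C0 using i j D by (simp add: scalar_prod_def)
      ultimately show "(A * B) $$ (i,j) = (B * A) $$ (i,j)" using i j by simp
    qed simp_all
    show False by (rule no_commuting_surj[OF A B assms(1) AB C0 surj])
  qed
  define S where "S = (\<lambda>lam. \<exists>v. dim_vec v = k \<and> v \<noteq> 0\<^sub>v k \<and> G *\<^sub>v v = lam \<cdot>\<^sub>v v)"
  have S0: "S (c0 * \<xi> * \<zeta>)" unfolding S_def by (rule exI[of _ c1]) (use c1nz V5 in simp)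
  have Sdown: "S (\<mu> / \<zeta>)" if "S \<mu>" for \<mu>
  proof -
    from that obtain v where v: "dim_vec v = k" "v \<noteq> 0\<^sub>v k" "G *\<^sub>v v = \<mu> \<cdot>\<^sub>v v" unfolding S_def by blast
    have "g *\<^sub>v v \<noteq> 0\<^sub>v k"
    proof
      assume "g *\<^sub>v v = 0\<^sub>v k"
      hence "gi *\<^sub>v (g *\<^sub>v v) = 0\<^sub>v k" using gp by simp
      thus False using gig[OF v(1)] v(2) by simp
    qed
    moreover have "G *\<^sub>v (g *\<^sub>v v) = (\<mu> / \<zeta>) \<cdot>\<^sub>v (g *\<^sub>v v)"
      using V1[OF v(1)] v by (simp add: smult_smult_assoc)
    ultimately show ?thesis unfolding S_def by (intro exI[of _ "g *\<^sub>v v"]) (use v in simp)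
  qed
  have Sdown_pow: "S (\<mu> / \<zeta> ^ i)" if "S \<mu>" for \<mu> i
  proof (induct i)
    case 0 thus ?case using that by simp
  next
    case (Suc i)
    from Sdown[OF Suc] show ?case by (simp add: field_simps)
  qed
  have Sup: "S (lam * (\<xi> * \<xi>))" if Sl: "S lam" for lam
  proof (rule ccontr)
    assume nS: "\<not> S (lam * (\<xi> * \<xi>))"
    from Sl obtain v where v: "dim_vec v = k" "v \<noteq> 0\<^sub>v k" "G *\<^sub>v v = lam \<cdot>\<^sub>v v" unfolding S_def by blast
    have vc: "v \<in> carrier_vec k" using v(1) by (rule carrier_vecI)
    have backS: "S (lam * (\<zeta> * \<zeta>) ^ i * (\<xi> * \<xi>)) \<Longrightarrow> False" for i
    proof -
      assume "S (lam * (\<zeta> * \<zeta>) ^ i * (\<xi> * \<xi>))"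
      from Sdown_pow[OF this, of "2 * i"]
      have h: "S (lam * (\<zeta> * \<zeta>) ^ i * (\<xi> * \<xi>) / \<zeta> ^ (2 * i))" .
      have e1: "(\<zeta> * \<zeta>) ^ i = \<zeta> ^ i * \<zeta> ^ i" by (rule power_mult_distrib)
      have e2: "\<zeta> ^ (2 * i) = \<zeta> ^ i * \<zeta> ^ i" by (simp add: mult_2 power_add)
      have nz2: "\<zeta> ^ i \<noteq> 0" by simp
      have "lam * (\<zeta> * \<zeta>) ^ i * (\<xi> * \<xi>) / \<zeta> ^ (2 * i) = lam * (\<xi> * \<xi>)"
        unfolding e1 e2 using nz2 by (simp add: field_simps)
      with h have "S (lam * (\<xi> * \<xi>))" by simp
      with nS show False by simp
    qed
    have dAi[simp]: "dim_vec ((A ^\<^sub>m i) *\<^sub>v v) = k" for i using A by simp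
    have Apow: "G *\<^sub>v ((A ^\<^sub>m i) *\<^sub>v v) = (lam * (\<zeta> * \<zeta>) ^ i) \<cdot>\<^sub>v ((A ^\<^sub>m i) *\<^sub>v v)" for i
    proof (induct i)
      case 0 thus ?case using v vc by simp
    next
      case (Suc i)
      have "(A ^\<^sub>m Suc i) *\<^sub>v v = (A * A ^\<^sub>m i) *\<^sub>v v" using pow_mat_commute[OF A A refl, of i] by simp
      also have "\<dots> = A *\<^sub>v ((A ^\<^sub>m i) *\<^sub>v v)" using A vc by simp
      finally have e: "(A ^\<^sub>m Suc i) *\<^sub>v v = A *\<^sub>v ((A ^\<^sub>m i) *\<^sub>v v)" .
      show ?case unfolding e using V2[of "(A ^\<^sub>m i) *\<^sub>v v"] Suc by (simp add: smult_smult_assoc field_simps)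
    qed
    have BA0: "B *\<^sub>v ((A ^\<^sub>m i) *\<^sub>v v) = 0\<^sub>v k" for i
    proof (rule ccontr)
      assume nz: "B *\<^sub>v ((A ^\<^sub>m i) *\<^sub>v v) \<noteq> 0\<^sub>v k"
      have "G *\<^sub>v (B *\<^sub>v ((A ^\<^sub>m i) *\<^sub>v v)) = (lam * (\<zeta> * \<zeta>) ^ i * (\<xi> * \<xi>)) \<cdot>\<^sub>v (B *\<^sub>v ((A ^\<^sub>m i) *\<^sub>v v))"
        using V3[of "(A ^\<^sub>m i) *\<^sub>v v"] Apow[of i] by (simp add: smult_smult_assoc field_simps)
      hence "S (lam * (\<zeta> * \<zeta>) ^ i * (\<xi> * \<xi>))" unfolding S_def using nz
        by (intro exI[of _ "B *\<^sub>v ((A ^\<^sub>m i) *\<^sub>v v)"]) simp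
      thus False by (rule backS)
    qed
    have DA0: "D *\<^sub>v ((A ^\<^sub>m i) *\<^sub>v v) = 0\<^sub>v 2" for i
    proof -
      define w where "w = (A ^\<^sub>m i) *\<^sub>v v"
      define l where "l = lam * (\<zeta> * \<zeta>) ^ i"
      have w: "dim_vec w = k" "G *\<^sub>v w = l \<cdot>\<^sub>v w" unfolding w_def l_def using Apow by auto
      have wc: "w \<in> carrier_vec k" using w(1) by (rule carrier_vecI)
      have z1: "d1 \<bullet> w = 0"
      proof (rule ccontr)
        assume nz: "d1 \<bullet> w \<noteq> 0"
        have "l * (d1 \<bullet> w) = (c0 / (\<xi> * \<zeta>)) * (d1 \<bullet> w)" using V6a[OF w(1)] w by simp
        hence "l = c0 / (\<xi> * \<zeta>)" using mult_right_cancel[OF nz] by blast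
        hence "l * (\<xi> * \<xi>) = c0 * \<xi> * \<zeta> / \<zeta> ^ 2" by (simp add: field_simps power2_eq_square)
        hence "S (l * (\<xi> * \<xi>))" using Sdown_pow[OF S0, of 2] by simp
        thus False using backS unfolding l_def by blast
      qed
      have z2: "d2 \<bullet> w = 0"
      proof (rule ccontr)
        assume nz: "d2 \<bullet> w \<noteq> 0"
        have "l * (d2 \<bullet> w) = (c0 / \<xi>) * (d2 \<bullet> w)" using V6b[OF w(1)] w by simp
        hence "l = c0 / \<xi>" using mult_right_cancel[OF nz] by blast
        hence "l * (\<xi> * \<xi>) = c0 * \<xi> * \<zeta> / \<zeta> ^ 1" by (simp add: field_simps)
        hence "S (l * (\<xi> * \<xi>))" by (subst (asm) eq_commute, subst (asm) eq_commute) (metis Sdown_pow[OF S0, of 1])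
        thus False using backS unfolding l_def by blast
      qed
      show ?thesis unfolding w_def[symmetric]
      proof (rule eq_vecI)
        fix p assume "p < dim_vec (0\<^sub>v 2 :: complex vec)"
        hence "p = 0 \<or> p = 1" by auto
        thus "(D *\<^sub>v w) $ p = (0\<^sub>v 2 :: complex vec) $ p"
          using D_mv2[OF D wc] z1 z2 unfolding d1_def d2_def by auto
      qed (use D in simp)
    qed
    obtain x z where x: "kcl A v k x" "x \<noteq> 0\<^sub>v k" "A *\<^sub>v x = z \<cdot>\<^sub>v x"
      using krylov_eigen[OF A vc v(2)] by blast
    have xc: "x \<in> carrier_vec k" using x(1) unfolding kcl_def by auto
    have Bx: "B *\<^sub>v x = 0\<^sub>v k" using x(1) B BA0 unfolding kcl_def by blast
    have Dx: "D *\<^sub>v x = 0\<^sub>v 2" using x(1) D DA0 unfolding kcl_def by blast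
    have "(A - z \<cdot>\<^sub>m 1\<^sub>m k) *\<^sub>v x = 0\<^sub>v k" using x(3) xc by (intro eq_vecI) auto
    moreover have "(B - 0 \<cdot>\<^sub>m 1\<^sub>m k) *\<^sub>v x = 0\<^sub>v k" using Bx xc by (intro eq_vecI) (auto dest!: arg_cong[of _ _ "\<lambda>v. v $ _"])
    ultimately have "x = 0\<^sub>v k" using inj[OF xc _ _ Dx] by blast
    with x(2) show False by simp
  qed
  have Sall: "S (c0 * \<xi> * \<zeta> * (\<xi> * \<xi>) ^ n)" for n
  proof (induct n)
    case 0 thus ?case using S0 by simp
  next
    case (Suc n) from Sup[OF Suc] show ?case by (simp add: field_simps)
  qed
  obtain m where jm: "j = 2 * int m"
  proof -
    from assms(2) obtain q where q: "j = 2 * q" by (rule evenE)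
    have "q \<ge> 0" using q assms(3) by simp
    thus ?thesis using that[of "nat q"] q by simp
  qed
  have mk: "m < k" using jm assms(4) by simp
  define lam where "lam i = Omega k j * omega_r k (i + 1)" for i
  have lamEq: "lam i = c0 * \<xi> * \<zeta> * (\<xi> * \<xi>) ^ (i + 1 + k - m)" for i
  proof -
    define n where "n = i + 1 + k - m"
    have rn: "real n = real i + 1 + real k - real m" unfolding n_def using mk by simp
    have xx: "\<xi> * \<xi> = cis (2 * pi / real k)" unfolding \<xi>_def by (simp add: cis_mult)
    have "c0 * \<xi> * \<zeta> * (\<xi> * \<xi>) ^ n = cis (- (real_of_int j * pi / (2 * real k)) + pi / real k + real_of_int j * pi / real k + real n * (2 * pi / real k))"
      unfolding xx DeMoivre unfolding c0_def \<xi>_def \<zeta>_def by (simp add: cis_mult)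
    also have "\<dots> = cis ((real_of_int (2 - j)) * pi / (2 * real k) + 2 * pi * real (i + 1) / real k + 2 * pi)"
      unfolding rn jm by (rule arg_cong[of _ _ cis]) (use kpos in \<open>simp add: field_simps\<close>)
    also have "\<dots> = lam i" unfolding lam_def Omega_def omega_r_def by (simp add: cis_mult[symmetric])
    finally show ?thesis unfolding n_def by simp
  qed
  have Slam: "S (lam i)" for i unfolding lamEq by (rule Sall)
  define vv where "vv i = (SOME v. dim_vec v = k \<and> v \<noteq> 0\<^sub>v k \<and> G *\<^sub>v v = lam i \<cdot>\<^sub>v v)" for i
  have vv: "vv i \<in> carrier_vec k \<and> vv i \<noteq> 0\<^sub>v k \<and> G *\<^sub>v vv i = lam i \<cdot>\<^sub>v vv i" for i
  proof -
    have "dim_vec (vv i) = k \<and> vv i \<noteq> 0\<^sub>v k \<and> G *\<^sub>v vv i = lam i \<cdot>\<^sub>v vv i"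
      unfolding vv_def by (rule someI_ex) (use Slam[of i] in \<open>unfold S_def\<close>)
    thus ?thesis by (auto intro: carrier_vecI)
  qed
  have Onz: "Omega k j \<noteq> 0" unfolding Omega_def by simp
  have injl: "inj_on lam {..<k}"
  proof (rule inj_onI)
    fix p q assume p: "p \<in> {..<k}" and q: "q \<in> {..<k}" and e: "lam p = lam q"
    have "omega_r k (p + 1) = omega_r k (q + 1)" using e Onz unfolding lam_def by simp
    thus "p = q" using omega_inj[OF assms(1)] p q by simp
  qed
  have Gc: "G \<in> carrier_mat k k" using Gdims by (intro carrier_matI) auto
  from eig_basis[OF Gc vv injl] obtain h where h: "h \<in> carrier_mat k k" "invertible_mat h"
    "h * G * minv h = mat_diag k lam" by blast
  have diag: "mat_diag k lam = Omega k j \<cdot>\<^sub>m mat_diag k (\<lambda>i. omega_r k (i + 1))"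
    by (rule eq_matI) (auto simp: mat_diag_def lam_def)
  show ?thesis using h unfolding G_def diag by blast
qed

end
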